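(* Let $n,m\geq 1$ and let $S_1,\dots,S_{n+m}$ be real random variables which are i.i.d. and have almost surely no ties (i.e. $S_i\neq S_j$ for all $i\neq j$ a.s.). Let $F(s)=\mathbb{P}(S_1\leq s)$, $s\in\mathbb{R}$, be their common c.d.f. Define the conformal $p$-values $$p_i=\frac{1}{n+1}\Big(1+\sum_{j=1}^n \mathbf{1}\{S_j\geq S_{n+i}\}\Big),\quad i\in\{1,\dots,m\}.$$ Set $U=(U_1,\dots,U_n)=(1-F(S_1),\dots,1-F(S_n))$. Then, conditionally on $\mathcal{D}_{\mathrm{cal}}=(S_1,\dots,S_n)$, the $p$-values $p_1,\dots,p_m$ are i.i.d. with common distribution $P^U$. In addition, $U_1,\dots,U_n$ are i.i.d. $\mathrm{Unif}[0,1]$.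
   Context: For a fixed vector $U=(U_1,\dots,U_n)\in[0,1]^n$, let $0=U_{(0)}\leq U_{(1)}\leq\dots\leq U_{(n)}\leq U_{(n+1)}=1$, where $U_{(1)}\leq\dots\leq U_{(n)}$ are the increasingly ordered values of $U_1,\dots,U_n$. $P^U$ denotes the discrete distribution on $\{\ell/(n+1):\ell\in\{1,\dots,n+1\}\}$ with $P^U(\{\ell/(n+1)\})=U_{(\ell)}-U_{(\ell-1)}$, $\ell\in\{1,\dots,n+1\}$; equivalently its c.d.f. is $F^U(x)=U_{(\lfloor (n+1)x\rfloor)}$, $x\in[0,1]$. *)

theory Defs
  imports "HOL-Probability.Probability"
begin

text \<open>Order statistics of a vector U = (U 0, ..., U (n-1)) (0-based indexing),
  with the conventions U_(0) = 0 and U_(n+1) = 1.\<close>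
definition order_stat :: "nat \<Rightarrow> (nat \<Rightarrow> real) \<Rightarrow> nat \<Rightarrow> real" where
  "order_stat n U l =
     (if l = 0 then 0 else if l = n + 1 then 1 else sort (map U [0..<n]) ! (l - 1))"

text \<open>The discrete distribution P^U on {l/(n+1) : l = 1..n+1},
  P^U({l/(n+1)}) = U_(l) - U_(l-1), given as its value on a set B.\<close>
definition PU :: "nat \<Rightarrow> (nat \<Rightarrow> real) \<Rightarrow> real set \<Rightarrow> real" where
  "PU n U B = (\<Sum>l\<in>{1..n+1}. if real l / real (n + 1) \<in> B
                 then order_stat n U l - order_stat n U (l - 1) else 0)"

text \<open>Conformal p-value for test index i (test score S (n+i)), calibration S 0..S (n-1).\<close>
definition conf_pvalue :: "nat \<Rightarrow> (nat \<Rightarrow> real) \<Rightarrow> nat \<Rightarrow> real" where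
  "conf_pvalue n s i = (1 + real (card {j. j < n \<and> s j \<ge> s (n + i)})) / real (n + 1)"

end

theory Submission
  imports Defs
begin

lemma sorted_nth_le_iff:
  fixes xs :: "real list"
  assumes "sorted xs" "i < length xs"
  shows "xs!i \<le> t \<longleftrightarrow> i+1 \<le> card {p. p < length xs \<and> xs!p \<le> t}"
proof
  assume h: "xs!i \<le> t"
  have "{..i} \<subseteq> {p. p < length xs \<and> xs!p \<le> t}"
    using assms h by (auto dest: sorted_nth_mono[of xs _ i])
  from card_mono[OF _ this] show "i+1 \<le> card {p. p < length xs \<and> xs!p \<le> t}" by simp
next
  assume h: "i+1 \<le> card {p. p < length xs \<and> xs!p \<le> t}"
  show "xs!i \<le> t"
  proof (rule ccontr)
    assume "\<not> xs!i \<le> t"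
    then have "{p. p < length xs \<and> xs!p \<le> t} \<subseteq> {..<i}"
      proof safe
      fix p assume p: "p < length xs" "xs!p \<le> t"
      show "p < i"
      proof (rule ccontr)
        assume "\<not> p < i"
        then have "xs!i \<le> xs!p" using assms p by (simp add: sorted_nth_mono)
        with p \<open>\<not> xs!i \<le> t\<close> show False by simp
      qed
    qed
    from card_mono[OF _ this] h show False by simp
  qed
qed

lemma sorted_nth_less_iff:
  fixes xs :: "real list"
  assumes "sorted xs" "i < length xs"
  shows "xs!i < t \<longleftrightarrow> i+1 \<le> card {p. p < length xs \<and> xs!p < t}"
proof
  assume h: "xs!i < t"
  have "{..i} \<subseteq> {p. p < length xs \<and> xs!p < t}"
    using assms h by (auto dest: sorted_nth_mono[of xs _ i])
  from card_mono[OF _ this] show "i+1 \<le> card {p. p < length xs \<and> xs!p < t}" by simp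
next
  assume h: "i+1 \<le> card {p. p < length xs \<and> xs!p < t}"
  show "xs!i < t"
  proof (rule ccontr)
    assume "\<not> xs!i < t"
    then have "{p. p < length xs \<and> xs!p < t} \<subseteq> {..<i}"
      proof safe
      fix p assume p: "p < length xs" "xs!p < t"
      show "p < i"
      proof (rule ccontr)
        assume "\<not> p < i"
        then have "xs!i \<le> xs!p" using assms p by (simp add: sorted_nth_mono)
        with p \<open>\<not> xs!i < t\<close> show False by simp
      qed
    qed
    from card_mono[OF _ this] h show False by simp
  qed
qed

lemma count_sort:
  "card {p. p < n \<and> P (sort (map u [0..<n]) ! p)} = card {j. j < n \<and> P (u j)}"
proof -
  have "card {p. p < n \<and> P (sort (map u [0..<n]) ! p)} = length (filter P (sort (map u [0..<n])))"
    by (simp add: length_filter_conv_card)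
  also have "\<dots> = size (filter_mset P (mset (sort (map u [0..<n]))))"
    by (metis mset_filter size_mset)
  also have "\<dots> = size (filter_mset P (mset (map u [0..<n])))" by simp
  also have "\<dots> = length (filter P (map u [0..<n]))" by (metis mset_filter size_mset)
  also have "\<dots> = card {j. j < n \<and> P (u j)}"
    by (simp add: length_filter_conv_card) (intro arg_cong[where f=card], auto)
  finally show ?thesis .
qed

lemma order_stat_le_iff:
  assumes "1 \<le> k" "k \<le> n"
  shows "order_stat n u k \<le> t \<longleftrightarrow> k \<le> card {j. j < n \<and> u j \<le> t}"
proof -
  have "order_stat n u k = sort (map u [0..<n]) ! (k-1)"
    using assms by (simp add: order_stat_def)
  moreover have "sort (map u [0..<n]) ! (k-1) \<le> t \<longleftrightarrow> k \<le> card {p. p < n \<and> sort (map u [0..<n]) ! p \<le> t}"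
    using sorted_nth_le_iff[of "sort (map u [0..<n])" "k-1" t] assms by simp
  ultimately show ?thesis using count_sort[of n "\<lambda>x. x \<le> t" u] by simp
qed

lemma order_stat_less_iff:
  assumes "1 \<le> k" "k \<le> n"
  shows "order_stat n u k < t \<longleftrightarrow> k \<le> card {j. j < n \<and> u j < t}"
proof -
  have "order_stat n u k = sort (map u [0..<n]) ! (k-1)"
    using assms by (simp add: order_stat_def)
  moreover have "sort (map u [0..<n]) ! (k-1) < t \<longleftrightarrow> k \<le> card {p. p < n \<and> sort (map u [0..<n]) ! p < t}"
    using sorted_nth_less_iff[of "sort (map u [0..<n])" "k-1" t] assms by simp
  ultimately show ?thesis using count_sort[of n "\<lambda>x. x < t" u] by simp
qed

lemma order_stat_in:
  assumes "1 \<le> k" "k \<le> n"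
  shows "\<exists>j<n. order_stat n u k = u j"
proof -
  have "order_stat n u k = sort (map u [0..<n]) ! (k-1)"
    using assms by (simp add: order_stat_def)
  moreover have "sort (map u [0..<n]) ! (k-1) \<in> set (sort (map u [0..<n]))"
    using assms by (intro nth_mem) simp
  ultimately show ?thesis by auto
qed

lemma card_compl_lt:
  "card {j. j < n \<and> P j} + card {j. j < n \<and> \<not> P j} = n"
proof -
  have "{j. j < n \<and> P j} \<union> {j. j < n \<and> \<not> P j} = {..<n}" by auto
  moreover have "card ({j. j < n \<and> P j} \<union> {j. j < n \<and> \<not> P j}) = card {j. j < n \<and> P j} + card {j. j < n \<and> \<not> P j}"
    by (rule card_Un_disjoint) auto
  ultimately show ?thesis by simp
qed

lemma eq_by_le_iff:
  fixes x y :: real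
  assumes "\<And>t. x \<le> t \<longleftrightarrow> y \<le> t" shows "x = y"
  using assms[of x] assms[of y] by simp

lemma kth:
  fixes c :: "nat \<Rightarrow> real" and F :: "real \<Rightarrow> real"
  assumes k: "1 \<le> k" "k \<le> n" and F: "mono F"
  shows "\<exists>a. (\<forall>t. k \<le> card {j. j < n \<and> c j \<ge> t} \<longleftrightarrow> t \<le> a)
             \<and> order_stat n (\<lambda>j. 1 - F (c j)) k = 1 - F a"
proof -
  define a where "a = order_stat n c (n+1-k)"
  have k': "1 \<le> n+1-k" "n+1-k \<le> n" using k by auto
  have cnt: "card {j. j < n \<and> c j < t} + card {j. j < n \<and> c j \<ge> t} = n" for t
    using card_compl_lt[of n "\<lambda>j. c j < t"] by (simp add: not_less)
  have char: "k \<le> card {j. j < n \<and> c j \<ge> t} \<longleftrightarrow> t \<le> a" for t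
  proof -
    have "t \<le> a \<longleftrightarrow> \<not> a < t" by auto
    also have "\<dots> \<longleftrightarrow> \<not> (n+1-k \<le> card {j. j < n \<and> c j < t})"
      unfolding a_def using order_stat_less_iff[OF k'] by simp
    also have "\<dots> \<longleftrightarrow> k \<le> card {j. j < n \<and> c j \<ge> t}"
      using cnt[of t] k by linarith
    finally show ?thesis by simp
  qed
  have gt: "card {j. j < n \<and> a < c j} < k"
  proof -
    have "order_stat n c (n+1-k) \<le> a" by (simp add: a_def)
    then have "n+1-k \<le> card {j. j < n \<and> c j \<le> a}"
      using order_stat_le_iff[OF k', of c a] by simp
    moreover have "card {j. j < n \<and> c j \<le> a} + card {j. j < n \<and> a < c j} = n"
      using card_compl_lt[of n "\<lambda>j. c j \<le> a"] by (simp add: not_le)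
    ultimately show ?thesis using k by linarith
  qed
  have "order_stat n (\<lambda>j. 1 - F (c j)) k = 1 - F a"
  proof (rule eq_by_le_iff)
    fix t
    show "order_stat n (\<lambda>j. 1 - F (c j)) k \<le> t \<longleftrightarrow> 1 - F a \<le> t"
    proof
      assume "order_stat n (\<lambda>j. 1 - F (c j)) k \<le> t"
      then have h: "k \<le> card {j. j < n \<and> 1 - F (c j) \<le> t}"
        using order_stat_le_iff[OF k] by simp
      show "1 - F a \<le> t"
      proof (rule ccontr)
        assume "\<not> 1 - F a \<le> t"
        then have "{j. j < n \<and> 1 - F (c j) \<le> t} \<subseteq> {j. j < n \<and> a < c j}"
          proof safe
          fix j assume j: "j < n" "1 - F (c j) \<le> t"
          show "a < c j"
          proof (rule ccontr)
            assume "\<not> a < c j"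
            then have "F (c j) \<le> F a" using F by (simp add: mono_def)
            with j \<open>\<not> 1 - F a \<le> t\<close> show False by simp
          qed
        qed
        from card_mono[OF _ this] h gt show False by simp
      qed
    next
      assume h: "1 - F a \<le> t"
      have "{j. j < n \<and> c j \<ge> a} \<subseteq> {j. j < n \<and> 1 - F (c j) \<le> t}"
        proof safe
        fix j assume j: "j < n" "a \<le> c j"
        then have "F a \<le> F (c j)" using F by (simp add: mono_def)
        with h show "1 - F (c j) \<le> t" by simp
      qed
      from card_mono[OF _ this] char[of a]
      have "k \<le> card {j. j < n \<and> 1 - F (c j) \<le> t}" by simp
      then show "order_stat n (\<lambda>j. 1 - F (c j)) k \<le> t"
        using order_stat_le_iff[OF k] by simp
    qed
  qed
  with char show ?thesis by blast
qed

context real_distribution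
begin

lemma cnt_ge_prob:
  fixes c :: "nat \<Rightarrow> real"
  assumes "k \<le> n+1"
  shows "{t. k \<le> card {j. j<n \<and> c j \<ge> t}} \<in> sets borel \<and>
         measure M {t. k \<le> card {j. j<n \<and> c j \<ge> t}} = 1 - order_stat n (\<lambda>j. 1 - cdf M (c j)) k"
proof -
  consider "k = 0" | "k = n+1" | "1 \<le> k" "k \<le> n" using assms by linarith
  then show ?thesis
  proof cases
    case 1
    then show ?thesis using prob_space by (simp add: order_stat_def)
  next
    case 2
    have "card {j. j<n \<and> c j \<ge> t} \<le> n" for t
      using card_mono[of "{..<n}" "{j. j<n \<and> c j \<ge> t}"] by auto
    then have "{t. k \<le> card {j. j<n \<and> c j \<ge> t}} = {}" using 2 by (auto simp: not_le less_Suc_eq_le)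
    then show ?thesis using 2 by (simp add: order_stat_def)
  next
    case 3
    have "mono (cdf M)" by (simp add: mono_def cdf_nondecreasing)
    from kth[OF 3 this, of c] obtain a where
      a: "\<And>t. k \<le> card {j. j < n \<and> c j \<ge> t} \<longleftrightarrow> t \<le> a"
         "order_stat n (\<lambda>j. 1 - cdf M (c j)) k = 1 - cdf M a" by blast
    have "{t. k \<le> card {j. j<n \<and> c j \<ge> t}} = {..a}" using a(1) by auto
    then show ?thesis using a(2) by (simp add: cdf_def)
  qed
qed

lemma pu_prob:
  fixes c :: "nat \<Rightarrow> real"
  shows "{t. (1 + real (card {j. j<n \<and> c j \<ge> t})) / real (n+1) \<in> B} \<in> sets borel \<and>
         measure M {t. (1 + real (card {j. j<n \<and> c j \<ge> t})) / real (n+1) \<in> B}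
           = PU n (\<lambda>j. 1 - cdf M (c j)) B"
proof -
  define cnt where "cnt t = card {j. j<n \<and> c j \<ge> t}" for t
  define G where "G k = {t. k \<le> cnt t}" for k
  define E where "E l = G (l - 1) - G l" for l
  define L where "L = {l\<in>{1..n+1}. real l / real (n+1) \<in> B}"
  define os where "os = order_stat n (\<lambda>j. 1 - cdf M (c j))"
  have G: "k \<le> n+1 \<Longrightarrow> G k \<in> sets borel \<and> measure M (G k) = 1 - os k" for k
    unfolding G_def cnt_def os_def by (rule cnt_ge_prob)
  have cntle: "cnt t \<le> n" for t
    unfolding cnt_def using card_mono[of "{..<n}" "{j. j<n \<and> c j \<ge> t}"] by auto
  have Esets: "l \<in> {1..n+1} \<Longrightarrow> E l \<in> sets borel" for l
    unfolding E_def using G[of l] G[of "l-1"] by auto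
  have Emeas: "l \<in> {1..n+1} \<Longrightarrow> measure M (E l) = os l - os (l - 1)" for l
  proof -
    assume l: "l \<in> {1..n+1}"
    have "G l \<subseteq> G (l-1)" unfolding G_def by auto
    then have "measure M (E l) = measure M (G (l-1)) - measure M (G l)"
      unfolding E_def using G[of l] G[of "l-1"] l by (intro finite_measure_Diff) auto
    moreover have "l - 1 \<le> n+1" using l by auto
    moreover have "l \<le> n+1" using l by auto
    ultimately show ?thesis using G[of l] G[of "l-1"] by simp
  qed
  have seteq: "{t. (1 + real (cnt t)) / real (n+1) \<in> B} = (\<Union>l\<in>L. E l)"
  proof safe
    fix t assume t: "(1 + real (cnt t)) / real (n+1) \<in> B"
    have "cnt t + 1 \<in> L" using t cntle[of t] unfolding L_def by (auto simp: add.commute)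
    moreover have "t \<in> E (cnt t + 1)" unfolding E_def G_def by auto
    ultimately show "t \<in> (\<Union>l\<in>L. E l)" by blast
  next
    fix t l assume l: "l \<in> L" and t: "t \<in> E l"
    then have "cnt t = l - 1" "l \<ge> 1" unfolding E_def G_def L_def by auto
    then have "(1 + real (cnt t)) = real l" by simp
    then show "(1 + real (cnt t)) / real (n+1) \<in> B" using l unfolding L_def by simp
  qed
  have disj: "disjoint_family_on E L"
    unfolding disjoint_family_on_def E_def G_def by auto
  have L: "L \<subseteq> {1..n+1}" "finite L" unfolding L_def by auto
  have "measure M (\<Union>l\<in>L. E l) = (\<Sum>l\<in>L. measure M (E l))"
    using L disj Esets by (intro finite_measure_finite_Union) auto
  also have "\<dots> = (\<Sum>l\<in>L. os l - os (l - 1))"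
    using L Emeas by (intro sum.cong) auto
  also have "\<dots> = PU n (\<lambda>j. 1 - cdf M (c j)) B"
    unfolding PU_def os_def L_def by (rule sum.inter_filter) simp
  finally have "measure M (\<Union>l\<in>L. E l) = PU n (\<lambda>j. 1 - cdf M (c j)) B" .
  moreover have "(\<Union>l\<in>L. E l) \<in> sets borel" using L Esets by (intro sets.finite_UN) auto
  ultimately show ?thesis using seteq unfolding cnt_def by simp
qed

end

context real_distribution
begin

lemma prob_ge_cdf:
  assumes atoms: "\<And>x. measure M {x} = 0" and y: "0 < y" "y \<le> 1"
  shows "measure M {s. y \<le> cdf M s} = 1 - y"
proof -
  have cont: "continuous_on UNIV (cdf M)"
    using atoms isCont_cdf by (intro continuous_at_imp_continuous_on) auto
  define Z where "Z = {s. y \<le> cdf M s}"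
  show ?thesis
  proof (cases "Z = {}")
    case True
    have "y = 1"
    proof (rule ccontr)
      assume "y \<noteq> 1" then have "y < 1" using y by simp
      then have "eventually (\<lambda>s. y < cdf M s) at_top"
        using order_tendstoD(1)[OF cdf_lim_at_top_prob] by simp
      then obtain s where "y < cdf M s" by (auto simp: eventually_at_top_linorder)
      then have "s \<in> Z" unfolding Z_def by simp
      then show False using True by simp
    qed
    then show ?thesis using True unfolding Z_def by simp
  next
    case False
    then obtain s0 where s0: "s0 \<in> Z" by auto
    have "eventually (\<lambda>s. cdf M s < y) at_bot"
      using order_tendstoD(2)[OF cdf_lim_at_bot] y by simp
    then obtain b where b: "\<And>s. s \<le> b \<Longrightarrow> cdf M s < y" by (auto simp: eventually_at_bot_linorder)
    have lb: "b \<le> s" if "s \<in> Z" for s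
      using b[of s] that unfolding Z_def by (cases "s \<le> b") auto
    have bdd: "bdd_below Z"
      unfolding bdd_below_def using lb by blast
    have closed: "closed Z"
      unfolding Z_def using cont by (intro closed_Collect_le) auto
    define q where "q = Inf Z"
    have qZ: "q \<in> Z" unfolding q_def using closed_contains_Inf[OF False bdd closed] .
    have Zeq: "Z = {q..}"
    proof safe
      fix s assume "s \<in> Z" then show "q \<le> s" unfolding q_def using bdd by (rule cInf_lower)
    next
      fix s assume "q \<le> s" then show "s \<in> Z" using qZ cdf_nondecreasing[of q s] unfolding Z_def
        by simp
    qed
    have bq: "b \<le> q" using qZ lb by simp
    have "\<exists>s\<ge>b. s \<le> q \<and> cdf M s = y"
      using b[of b] qZ bq cont unfolding Z_def
      by (intro IVT') (auto intro: continuous_on_subset)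
    then obtain s where s: "b \<le> s" "s \<le> q" "cdf M s = y" by blast
    then have "s \<in> Z" unfolding Z_def by simp
    then have "s = q" using Zeq s by auto
    with s have cq: "cdf M q = y" by simp
    have "measure M {..<q} = measure M ({..q} - {q})"
      by (intro arg_cong[where f="measure M"]) auto
    also have "\<dots> = cdf M q"
      using atoms[of q] by (subst finite_measure_Diff) (auto simp: cdf_def)
    finally have lt: "measure M {..<q} = y" using cq by simp
    have "measure M {q..} = measure M (space M - {..<q})"
      by (intro arg_cong[where f="measure M"]) auto
    also have "\<dots> = 1 - y" using prob_compl[of "{..<q}"] lt by simp
    finally show ?thesis using Zeq unfolding Z_def by simp
  qed
qed

lemma uniform_transform:
  assumes atoms: "\<And>x. measure M {x} = 0"
  shows "distr M lborel (\<lambda>s. 1 - cdf M s) = uniform_measure lborel {0..1}"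
proof (rule cdf_unique)
  have "mono (cdf M)" by (simp add: mono_def cdf_nondecreasing)
  then have meas: "(\<lambda>s. 1 - cdf M s) \<in> borel_measurable borel"
    by (intro borel_measurable_diff borel_measurable_const borel_measurable_mono)
  then have meas': "(\<lambda>s. 1 - cdf M s) \<in> measurable M lborel"
    unfolding measurable_lborel1 by (rule measurable_finite_borel)
  show rd: "real_distribution (distr M lborel (\<lambda>s. 1 - cdf M s))"
    unfolding real_distribution_def real_distribution_axioms_def
  proof (intro conjI)
    show "prob_space (distr M lborel (\<lambda>s. 1 - cdf M s))" by (rule prob_space_distr[OF meas'])
  qed simp
  show "real_distribution (uniform_measure lborel {0..1::real})"
    unfolding real_distribution_def real_distribution_axioms_def
    by (auto intro!: prob_space_uniform_measure)
  show "cdf (distr M lborel (\<lambda>s. 1 - cdf M s)) = cdf (uniform_measure lborel {0..1})"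
  proof
    fix x :: real
    have "cdf (distr M lborel (\<lambda>s. 1 - cdf M s)) x = measure (distr M lborel (\<lambda>s. 1 - cdf M s)) {..x}"
      by (rule cdf_def2)
    also have "\<dots> = measure M ((\<lambda>s. 1 - cdf M s) -` {..x} \<inter> space M)"
      by (rule measure_distr[OF meas']) simp
    also have "\<dots> = measure M {s. 1 - x \<le> cdf M s}"
      by (intro arg_cong[where f="measure M"]) auto
    also have "\<dots> = (if x < 0 then 0 else if x < 1 then x else 1)"
    proof -
      consider "x < 0" | "0 \<le> x" "x < 1" | "1 \<le> x" by linarith
      then show ?thesis
      proof cases
        case 1
        have "cdf M s < 1 - x" for s using cdf_bounded_prob[of s] 1 by linarith
        then have "{s. 1 - x \<le> cdf M s} = {}" by (simp add: not_le)
        then show ?thesis using 1 by simp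
      next
        case 2 then show ?thesis using prob_ge_cdf[OF atoms, of "1 - x"] by simp
      next
        case 3
        have "1 - x \<le> cdf M s" for s using cdf_nonneg[of s] 3 by linarith
        then have "{s. 1 - x \<le> cdf M s} = space M" by simp
        then show ?thesis using 3 prob_space by simp
      qed
    qed
    also have "\<dots> = cdf (uniform_measure lborel {0..1}) x"
    proof -
      have "cdf (uniform_measure lborel {0..1}) x = measure lborel ({0..1} \<inter> {..x}) / measure lborel {0..1::real}"
        unfolding cdf_def by (subst measure_uniform_measure) auto
      also have "\<dots> = measure lborel ({0..1} \<inter> {..x})" by simp
      also have "\<dots> = (if x < 0 then 0 else if x < 1 then x else 1)"
      proof -
        consider "x < 0" | "0 \<le> x" "x < 1" | "1 \<le> x" by linarith
        then show ?thesis
        proof cases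
          case 1 then have "{0..1} \<inter> {..x} = {}" by auto
          then show ?thesis using 1 by simp
        next
          case 2 then have "{0..1} \<inter> {..x} = {0..x}" by auto
          then show ?thesis using 2 by simp
        next
          case 3 then have "{0..1} \<inter> {..x} = {0..1}" by auto
          then show ?thesis using 3 by simp
        qed
      qed
      finally show ?thesis by simp
    qed
    finally show "cdf (distr M lborel (\<lambda>s. 1 - cdf M s)) x = cdf (uniform_measure lborel {0..1}) x" .
  qed
qed

end

lemma meas_cnt:
  fixes n :: nat and f :: "nat \<Rightarrow> 'a \<Rightarrow> real"
  assumes "\<And>j. j < n \<Longrightarrow> f j \<in> borel_measurable N" "h \<in> borel_measurable N"
  shows "(\<lambda>x. real (card {j. j < n \<and> f j x \<ge> h x})) \<in> borel_measurable N"
proof -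
  have eq: "real (card {j. j < n \<and> f j x \<ge> h x}) = (\<Sum>j<n. if h x \<le> f j x then 1 else 0)" for x
  proof -
    have "{j. j < n \<and> f j x \<ge> h x} = {j\<in>{..<n}. h x \<le> f j x}" by auto
    then have "real (card {j. j < n \<and> f j x \<ge> h x}) = (\<Sum>j\<in>{j\<in>{..<n}. h x \<le> f j x}. 1)" by simp
    also have "\<dots> = (\<Sum>j<n. if h x \<le> f j x then 1 else 0)" using sum.inter_filter[of "{..<n}" "\<lambda>_. 1::real" "\<lambda>j. h x \<le> f j x"] by simp
    finally show ?thesis .
  qed
  show ?thesis unfolding eq
    using assms by (intro borel_measurable_sum measurable_If borel_measurable_le measurable_const) auto
qed

lemma PU_cong:
  assumes "\<And>j. j < n \<Longrightarrow> u j = v j"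
  shows "PU n u B = PU n v B"
proof -
  have e: "map u [0..<n] = map v [0..<n]" using assms by simp
  have "order_stat n u = order_stat n v" unfolding order_stat_def by (simp only: e)
  then show ?thesis unfolding PU_def by (simp only:)
qed

theorem proposition1:
  fixes M :: "'a measure" and S :: "nat \<Rightarrow> 'a \<Rightarrow> real" and n m :: nat
  assumes "prob_space M"
    and "n \<ge> 1" and "m \<ge> 1"
    and indep: "prob_space.indep_vars M (\<lambda>_. borel) S {..<n+m}"
    and ident: "\<forall>i<n+m. distr M borel (S i) = distr M borel (S 0)"
    and noties: "AE x in M. \<forall>i<n+m. \<forall>j<n+m. i \<noteq> j \<longrightarrow> S i x \<noteq> S j x"
  defines "F \<equiv> (\<lambda>s. measure M {x \<in> space M. S 0 x \<le> s})"
  defines "U \<equiv> (\<lambda>x j. 1 - F (S j x))"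
  shows "(\<forall>A \<in> sets (PiM {..<n} (\<lambda>_. borel)). \<forall>B :: nat \<Rightarrow> real set. (\<forall>i<m. B i \<in> sets borel) \<longrightarrow>
            measure M {x \<in> space M. (\<lambda>j\<in>{..<n}. S j x) \<in> A \<and>
                                      (\<forall>i<m. conf_pvalue n (\<lambda>j. S j x) i \<in> B i)}
            = (\<integral>x. indicator A (\<lambda>j\<in>{..<n}. S j x) * (\<Prod>i<m. PU n (U x) (B i)) \<partial>M))
       \<and> prob_space.indep_vars M (\<lambda>_. borel) (\<lambda>j x. U x j) {..<n}
       \<and> (\<forall>j<n. distr M lborel (\<lambda>x. U x j) = uniform_measure lborel {0..1})"
proof -
  interpret prob_space M by fact
  have rv: "random_variable borel (S i)" if "i < n+m" for i
    using indep that unfolding indep_vars_def by auto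
  have nm: "0 < n+m" "1 < n+m" using assms(2,3) by auto
  define D where "D = distr M borel (S 0)"
  interpret D: real_distribution D unfolding D_def using rv[OF nm(1)] by simp
  have distrS: "distr M borel (S i) = D" if "i < n+m" for i
    using ident that unfolding D_def by auto
  have measD: "measure D X = prob (S i -` X \<inter> space M)" if "i < n+m" "X \<in> sets borel" for i X
    using distrS[OF that(1)] measure_distr[OF rv[OF that(1)] that(2)] by simp
  have Feq: "F = cdf D"
  proof
    fix s
    have "F s = prob (S 0 -` {..s} \<inter> space M)"
      unfolding F_def by (intro arg_cong[where f=prob]) auto
    also have "\<dots> = cdf D s" using measD[OF nm(1), of "{..s}"] by (simp add: cdf_def)
    finally show "F s = cdf D s" .
  qed
  have atoms: "measure D {a} = 0" for a
  proof -
    let ?E = "\<Inter>j\<in>{0::nat,1}. S j -` {a} \<inter> space M"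
    have "prob ?E = (\<Prod>j\<in>{0::nat,1}. prob (S j -` {a} \<inter> space M))"
      using nm by (intro indep_varsD[OF indep]) auto
    also have "\<dots> = measure D {a} * measure D {a}"
      using measD[OF nm(1), of "{a}"] measD[OF nm(2), of "{a}"] by simp
    finally have eq: "prob ?E = measure D {a} * measure D {a}" .
    have Esets: "?E \<in> events" using rv nm by auto
    have "AE x in M. x \<notin> ?E"
      using noties
    proof (rule eventually_mono)
      fix x assume "\<forall>i<n + m. \<forall>j<n + m. i \<noteq> j \<longrightarrow> S i x \<noteq> S j x"
      then have "S 0 x \<noteq> S 1 x" using nm by auto
      then show "x \<notin> ?E" by auto
    qed
    then have "?E \<in> null_sets M" using AE_iff_null_sets[OF Esets] by simp
    then have "prob ?E = 0" by (rule measure_eq_0_null_sets)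
    with eq show ?thesis by simp
  qed
  have Fmeas: "(\<lambda>s. 1 - F s) \<in> borel_measurable borel"
    unfolding Feq by (intro borel_measurable_diff borel_measurable_const borel_measurable_mono)
      (simp add: mono_def D.cdf_nondecreasing)
  have unif: "\<forall>j<n. distr M lborel (\<lambda>x. U x j) = uniform_measure lborel {0..1}"
  proof safe
    fix j assume j: "j < n"
    have "distr M lborel (\<lambda>x. U x j) = distr M lborel ((\<lambda>s. 1 - F s) \<circ> S j)"
      unfolding U_def by (simp add: comp_def)
    also have "\<dots> = distr (distr M borel (S j)) lborel (\<lambda>s. 1 - F s)"
    proof -
      have m1: "(\<lambda>s. 1 - F s) \<in> measurable borel lborel" using Fmeas by simp
      have m2: "S j \<in> measurable M borel" using rv[of j] j by simp
      show ?thesis by (rule distr_distr[OF m1 m2, symmetric])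
    qed
    also have "\<dots> = distr D lborel (\<lambda>s. 1 - cdf D s)"
      using distrS[of j] j Feq by simp
    also have "\<dots> = uniform_measure lborel {0..1}"
      by (rule D.uniform_transform[OF atoms])
    finally show "distr M lborel (\<lambda>x. U x j) = uniform_measure lborel {0..1}" .
  qed
  have indU: "indep_vars (\<lambda>_. borel) (\<lambda>j x. U x j) {..<n}"
  proof -
    have "indep_vars (\<lambda>_. borel) S {..<n}"
      using indep by (rule indep_vars_subset) auto
    then have "indep_vars (\<lambda>_. borel) (\<lambda>i x. (\<lambda>s. 1 - F s) (S i x)) {..<n}"
      using Fmeas by (intro indep_vars_compose2[where Y="\<lambda>_ s. 1 - F s" and N="\<lambda>_. borel"]) simp_all
    then show ?thesis unfolding U_def by simp
  qed
  have main: "measure M {x \<in> space M. (\<lambda>j\<in>{..<n}. S j x) \<in> A \<and>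
                                      (\<forall>i<m. conf_pvalue n (\<lambda>j. S j x) i \<in> B i)}
            = (\<integral>x. indicator A (\<lambda>j\<in>{..<n}. S j x) * (\<Prod>i<m. PU n (U x) (B i)) \<partial>M)"
    if A: "A \<in> sets (PiM {..<n} (\<lambda>_. borel))" and B: "\<forall>i<m. B i \<in> sets borel"
    for A :: "(nat \<Rightarrow> real) set" and B
  proof -
    define K where "K = {..<n+m}"
    define I where "I = {..<n}"
    define J where "J = {n..<n+m}"
    have KIJ: "K = I \<union> J" "I \<inter> J = {}" "finite I" "finite J" "I \<subseteq> K" "K \<noteq> {}"
      unfolding K_def I_def J_def using nm by auto
    define g where "g x t = (1 + real (card {j. j < n \<and> x j \<ge> t})) / real (n+1)"
      for x :: "nat \<Rightarrow> real" and t
    define Z where "Z x i = {t. g x t \<in> B i}" for x i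
    define h where "h x = indicator A x * (\<Prod>i<m. measure D (Z x i))" for x
    have Zsets: "Z x i \<in> sets borel" for x i
      unfolding Z_def g_def using D.pu_prob by blast
    have ZPU: "measure D (Z x i) = PU n (\<lambda>j. 1 - cdf D (x j)) (B i)" for x i
      unfolding Z_def g_def using D.pu_prob by blast
    interpret PS: product_sigma_finite "\<lambda>_::nat. D"
      unfolding product_sigma_finite_def using D.prob_space_axioms prob_space_imp_sigma_finite by blast
    define PK where "PK = PiM K (\<lambda>_. borel :: real measure)"
    define PD where "PD = PiM K (\<lambda>_. D)"
    define PI where "PI = PiM I (\<lambda>_. D)"
    define PJ where "PJ = PiM J (\<lambda>_. D)"
    have setsPD: "sets PD = sets PK" unfolding PD_def PK_def by (rule sets_PiM_cong) auto
    have setsPI: "sets PI = sets (PiM I (\<lambda>_. borel :: real measure))" unfolding PI_def by (rule sets_PiM_cong) auto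
    have spacePI: "space PI = space (PiM I (\<lambda>_. borel :: real measure))" using setsPI by (rule sets_eq_imp_space_eq)
    interpret PIps: prob_space PI unfolding PI_def by (intro prob_space_PiM D.prob_space_axioms)
    define X where "X x = (\<lambda>i\<in>K. S i x)" for x
    define C where "C x = (\<lambda>i\<in>I. S i x)" for x
    have Xmeas: "X \<in> measurable M PK"
      unfolding X_def PK_def by (intro measurable_restrict) (simp add: rv K_def)
    have Cmeas: "C \<in> measurable M (PiM I (\<lambda>_. borel))"
      unfolding C_def by (intro measurable_restrict) (simp add: rv I_def)
    have distrX: "distr M PK X = PD"
    proof -
      have rvK: "random_variable borel (S i)" if "i \<in> K" for i
        using that rv[of i] unfolding K_def by simp
      have "distr M PK X = PiM K (\<lambda>i. distr M borel (S i))"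
        using indep_vars_iff_distr_eq_PiM'[OF KIJ(6) rvK] indep unfolding PK_def X_def K_def by simp
      also have "\<dots> = PD" unfolding PD_def by (rule PiM_cong) (auto simp: distrS K_def)
      finally show ?thesis .
    qed
    have distrC: "distr M (PiM I (\<lambda>_. borel)) C = PI"
    proof -
      have indI: "indep_vars (\<lambda>_. borel) S I"
        using indep by (rule indep_vars_subset) (auto simp: I_def)
      have "0 \<in> I" using assms(2) unfolding I_def by simp
      then have Ine: "I \<noteq> {}" by blast
      have rvI: "random_variable borel (S i)" if "i \<in> I" for i
        using that rv[of i] unfolding I_def by simp
      have "distr M (PiM I (\<lambda>_. borel)) C = PiM I (\<lambda>i. distr M borel (S i))"
        using indep_vars_iff_distr_eq_PiM'[OF Ine rvI] indI unfolding C_def by simp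
      also have "\<dots> = PI" unfolding PI_def by (rule PiM_cong) (auto simp: distrS I_def)
      finally show ?thesis .
    qed
    define E where "E = {\<omega> \<in> space PK. restrict \<omega> I \<in> A \<and> (\<forall>i<m. conf_pvalue n \<omega> i \<in> B i)}"
    have cpm: "(\<lambda>\<omega>. conf_pvalue n \<omega> i) \<in> borel_measurable PK" if "i < m" for i
    proof -
      have comp: "(\<lambda>\<omega>. \<omega> k) \<in> borel_measurable PK" if "k < n+m" for k
        unfolding PK_def using that by (intro measurable_component_singleton) (simp add: K_def)
      have "(\<lambda>\<omega>. real (card {j. j < n \<and> \<omega> j \<ge> \<omega> (n+i)})) \<in> borel_measurable PK"
        by (rule meas_cnt[where f="\<lambda>j \<omega>. \<omega> j" and h="\<lambda>\<omega>. \<omega> (n+i)"]) (use comp \<open>i < m\<close> in simp_all)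
      then show ?thesis unfolding conf_pvalue_def
        by (intro borel_measurable_divide borel_measurable_add borel_measurable_const)
    qed
    have Esets: "E \<in> sets PK"
    proof -
      have AI: "A \<in> sets (PiM I (\<lambda>_. borel :: real measure))" using A by (simp add: I_def)
      have "E = ((\<lambda>\<omega>. restrict \<omega> I) -` A \<inter> space PK) \<inter> (\<Inter>i\<in>{..<m}. (\<lambda>\<omega>. conf_pvalue n \<omega> i) -` B i \<inter> space PK)"
        unfolding E_def using nm by auto
      moreover have "(\<lambda>\<omega>. restrict \<omega> I) -` A \<inter> space PK \<in> sets PK"
        unfolding PK_def by (rule measurable_sets[OF measurable_restrict_subset[OF KIJ(5)] AI])
      moreover have "(\<Inter>i\<in>{..<m}. (\<lambda>\<omega>. conf_pvalue n \<omega> i) -` B i \<inter> space PK) \<in> sets PK"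
      proof (rule sets.finite_INT)
        have "0 \<in> {..<m}" using assms(3) by simp
        then show "{..<m} \<noteq> {}" by blast
        show "(\<lambda>\<omega>. conf_pvalue n \<omega> i) -` B i \<inter> space PK \<in> sets PK" if "i \<in> {..<m}" for i
          using cpm[of i] B that by (intro measurable_sets) auto
      qed simp
      ultimately show ?thesis by simp
    qed
    have LHS: "measure M {x \<in> space M. (\<lambda>j\<in>{..<n}. S j x) \<in> A \<and>
                                      (\<forall>i<m. conf_pvalue n (\<lambda>j. S j x) i \<in> B i)} = measure PD E"
    proof -
      have "{x \<in> space M. (\<lambda>j\<in>{..<n}. S j x) \<in> A \<and>
                                      (\<forall>i<m. conf_pvalue n (\<lambda>j. S j x) i \<in> B i)} = X -` E \<inter> space M"
      proof -
        have r: "restrict (X x) I = (\<lambda>j\<in>{..<n}. S j x)" for x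
          unfolding X_def I_def K_def by (auto simp: restrict_def fun_eq_iff)
        have c: "conf_pvalue n (X x) i = conf_pvalue n (\<lambda>j. S j x) i" if "i < m" for x i
        proof -
          have "{j. j < n \<and> X x j \<ge> X x (n+i)} = {j. j < n \<and> S j x \<ge> S (n+i) x}"
            unfolding X_def K_def using that by auto
          then show ?thesis unfolding conf_pvalue_def by simp
        qed
        have "X x \<in> space PK" if "x \<in> space M" for x using Xmeas that by (rule measurable_space)
        then show ?thesis unfolding E_def using r c by auto
      qed
      then show ?thesis
        using measure_distr[OF Xmeas Esets] distrX by simp
    qed
    have hmeas: "h \<in> borel_measurable PI"
    proof -
      have mZ: "(\<lambda>x. measure D (Z x i)) \<in> borel_measurable PI" if i: "i < m" for i
      proof -
        have compD: "(\<lambda>x. x j) \<in> borel_measurable PI" if "j < n" for j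
        proof -
          have "(\<lambda>x. x j) \<in> measurable PI D"
            unfolding PI_def by (rule measurable_component_singleton) (simp add: I_def that)
          then show ?thesis unfolding measurable_cong_sets[OF refl D.events_eq_borel] .
        qed
        have sndD: "snd \<in> borel_measurable (PI \<Otimes>\<^sub>M D)"
          using measurable_snd[of PI D] unfolding measurable_cong_sets[OF refl D.events_eq_borel] .
        have "(\<lambda>w. real (card {j. j < n \<and> fst w j \<ge> snd w})) \<in> borel_measurable (PI \<Otimes>\<^sub>M D)"
          by (rule meas_cnt[where f="\<lambda>j w. fst w j" and h="snd"])
            (simp_all add: measurable_compose[OF measurable_fst compD] sndD)
        then have gm: "(\<lambda>w. g (fst w) (snd w)) \<in> borel_measurable (PI \<Otimes>\<^sub>M D)"
          unfolding g_def by (intro borel_measurable_divide borel_measurable_add borel_measurable_const)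
        define Q where "Q = (\<lambda>w. g (fst w) (snd w)) -` B i \<inter> space (PI \<Otimes>\<^sub>M D)"
        have Qsets: "Q \<in> sets (PI \<Otimes>\<^sub>M D)"
          unfolding Q_def using gm B i by (intro measurable_sets) auto
        have "(\<lambda>x. enn2real (emeasure D (Pair x -` Q))) \<in> borel_measurable PI"
          by (intro borel_measurable_enn2real D.measurable_emeasure_Pair[OF Qsets])
        moreover have "enn2real (emeasure D (Pair x -` Q)) = measure D (Z x i)" if "x \<in> space PI" for x
        proof -
          have "Pair x -` Q = Z x i"
            unfolding Q_def Z_def using that by (auto simp: space_pair_measure)
          then show ?thesis by (simp add: measure_def)
        qed
        ultimately show ?thesis by (subst (asm) measurable_cong) auto
      qed
      have AI: "A \<in> sets PI" using A setsPI by (simp add: I_def)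
      have "(\<lambda>x. \<Prod>i<m. measure D (Z x i)) \<in> borel_measurable PI"
        by (rule borel_measurable_prod) (simp add: mZ)
      then show ?thesis unfolding h_def
        by (rule borel_measurable_times[OF borel_measurable_indicator[OF AI]])
    qed
    have hbound: "0 \<le> h x" "h x \<le> 1" for x
    proof -
      have "0 \<le> (\<Prod>i<m. measure D (Z x i))" by (intro prod_nonneg) simp
      moreover have "(\<Prod>i<m. measure D (Z x i)) \<le> 1" by (intro prod_le_1) simp
      ultimately show "0 \<le> h x" "h x \<le> 1" unfolding h_def by (auto simp: indicator_def)
    qed
    have fold: "emeasure PD E = (\<integral>\<^sup>+x. ennreal (h x) \<partial>PI)"
    proof -
      have EPD: "E \<in> sets PD" using Esets setsPD by simp
      have EPD': "E \<in> sets (PiM (I \<union> J) (\<lambda>_. D))" using EPD unfolding PD_def KIJ(1) .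
      have "emeasure PD E = (\<integral>\<^sup>+\<omega>. indicator E \<omega> \<partial>PD)"
        by (rule nn_integral_indicator[symmetric, OF EPD])
      also have "\<dots> = (\<integral>\<^sup>+\<omega>. indicator E \<omega> \<partial>PiM (I \<union> J) (\<lambda>_. D))"
        unfolding PD_def KIJ(1) ..
      also have "\<dots> = (\<integral>\<^sup>+x. (\<integral>\<^sup>+y. indicator E (merge I J (x, y)) \<partial>PJ) \<partial>PI)"
        unfolding PI_def PJ_def
        by (rule PS.product_nn_integral_fold[OF KIJ(2,3,4) borel_measurable_indicator[OF EPD']])
      also have "\<dots> = (\<integral>\<^sup>+x. ennreal (h x) \<partial>PI)"
      proof (rule nn_integral_cong)
        fix x assume x: "x \<in> space PI"
        define P where "P = PiE J (\<lambda>k. Z x (k - n))"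
        have Psets: "P \<in> sets PJ"
          unfolding P_def PJ_def using KIJ(4) Zsets by (intro sets_PiM_I_finite) auto
        have xI: "x \<in> PiE I (\<lambda>_. UNIV)" using x unfolding PI_def by (simp add: space_PiM)
        have "(\<integral>\<^sup>+y. indicator E (merge I J (x, y)) \<partial>PJ) = (\<integral>\<^sup>+y. indicator A x * indicator P y \<partial>PJ)"
        proof (rule nn_integral_cong)
          fix y assume y: "y \<in> space PJ"
          have yJ: "y \<in> PiE J (\<lambda>_. UNIV)" using y unfolding PJ_def by (simp add: space_PiM)
          have sp: "merge I J (x, y) \<in> space PK"
            using xI yJ unfolding PK_def KIJ(1) by (auto simp: space_PiM merge_def PiE_iff extensional_def)
          have r: "restrict (merge I J (x, y)) I = x"
            using KIJ(2) xI by (simp add: extensional_restrict)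
          have c: "conf_pvalue n (merge I J (x, y)) i = g x (y (n+i))" if "i < m" for i
          proof -
            have "{j. j < n \<and> merge I J (x, y) j \<ge> merge I J (x, y) (n+i)} = {j. j < n \<and> x j \<ge> y (n+i)}"
              using that by (auto simp: merge_def I_def J_def)
            then show ?thesis unfolding conf_pvalue_def g_def by simp
          qed
          have p: "y \<in> P \<longleftrightarrow> (\<forall>i<m. g x (y (n+i)) \<in> B i)"
          proof
            assume "y \<in> P"
            then have h: "\<forall>k\<in>J. y k \<in> Z x (k - n)" unfolding P_def by (simp add: PiE_iff)
            show "\<forall>i<m. g x (y (n+i)) \<in> B i"
            proof safe
              fix i assume "i < m"
              then have "n + i \<in> J" unfolding J_def by simp
              then show "g x (y (n+i)) \<in> B i" using h unfolding Z_def by fastforce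
            qed
          next
            assume h: "\<forall>i<m. g x (y (n+i)) \<in> B i"
            have "y k \<in> Z x (k - n)" if "k \<in> J" for k
              using h[rule_format, of "k - n"] that unfolding J_def Z_def by auto
            then show "y \<in> P" unfolding P_def using yJ by (auto simp: PiE_iff)
          qed
          have "merge I J (x, y) \<in> E \<longleftrightarrow> x \<in> A \<and> y \<in> P"
            unfolding E_def using sp r c p by auto
          then show "indicator E (merge I J (x, y)) = indicator A x * (indicator P y :: ennreal)"
            by (auto simp: indicator_def)
        qed
        also have "\<dots> = indicator A x * emeasure PJ P"
          by (rule nn_integral_cmult_indicator[OF Psets])
        also have "emeasure PJ P = (\<Prod>k\<in>J. emeasure D (Z x (k - n)))"
          unfolding PJ_def P_def using KIJ(4) Zsets by (intro PS.emeasure_PiM) auto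
        also have "\<dots> = (\<Prod>k\<in>J. ennreal (measure D (Z x (k - n))))"
          by (simp add: D.emeasure_eq_measure)
        also have "\<dots> = ennreal (\<Prod>k\<in>J. measure D (Z x (k - n)))"
          by (rule prod_ennreal) simp
        also have "(\<Prod>k\<in>J. measure D (Z x (k - n))) = (\<Prod>i<m. measure D (Z x i))"
        proof -
          have Jeq: "J = (\<lambda>i. i + n) ` {0..<m}" unfolding J_def by (simp add: add.commute)
          have "(\<Prod>k\<in>(\<lambda>i. i + n) ` {0..<m}. measure D (Z x (k - n))) = (\<Prod>i\<in>{0..<m}. measure D (Z x (i + n - n)))"
            by (subst prod.reindex) (auto simp: inj_on_def)
          then show ?thesis unfolding Jeq by (simp add: lessThan_atLeast0)
        qed
        finally show "(\<integral>\<^sup>+y. indicator E (merge I J (x, y)) \<partial>PJ) = ennreal (h x)"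
          unfolding h_def by (simp add: indicator_def)
      qed
      finally show ?thesis .
    qed
    have RHS: "(\<integral>x. indicator A (\<lambda>j\<in>{..<n}. S j x) * (\<Prod>i<m. PU n (U x) (B i)) \<partial>M) = integral\<^sup>L PI h"
    proof -
      have "(\<integral>x. indicator A (\<lambda>j\<in>{..<n}. S j x) * (\<Prod>i<m. PU n (U x) (B i)) \<partial>M) = (\<integral>x. h (C x) \<partial>M)"
      proof (rule Bochner_Integration.integral_cong[OF refl])
        fix x
        have "PU n (U x) (B i) = measure D (Z (C x) i)" for i
        proof -
          have "PU n (U x) (B i) = PU n (\<lambda>j. 1 - cdf D (C x j)) (B i)"
            by (rule PU_cong) (simp add: U_def Feq C_def I_def)
          then show ?thesis using ZPU by simp
        qed
        then show "indicator A (\<lambda>j\<in>{..<n}. S j x) * (\<Prod>i<m. PU n (U x) (B i)) = h (C x)"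
          unfolding h_def C_def I_def by simp
      qed
      also have "\<dots> = integral\<^sup>L (distr M (PiM I (\<lambda>_. borel)) C) h"
      proof -
        have hmeas': "h \<in> borel_measurable (PiM I (\<lambda>_. borel))"
          using hmeas unfolding measurable_cong_sets[OF setsPI refl] .
        show ?thesis by (rule integral_distr[OF Cmeas hmeas', symmetric])
      qed
      also have "\<dots> = integral\<^sup>L PI h" using distrC by simp
      finally show ?thesis .
    qed
    have "measure PD E = enn2real (emeasure PD E)" unfolding measure_def ..
    also have "\<dots> = enn2real (\<integral>\<^sup>+x. ennreal (h x) \<partial>PI)" unfolding fold ..
    also have "\<dots> = integral\<^sup>L PI h"
      by (rule enn2real_nn_integral_eq_integral[OF AE_I2[OF refl] AE_I2[OF hbound(1)] hmeas])
    finally show ?thesis using LHS RHS by simp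
  qed
  show ?thesis
  proof (intro conjI ballI allI impI)
    fix A :: "(nat \<Rightarrow> real) set" and B :: "nat \<Rightarrow> real set"
    assume "A \<in> sets (PiM {..<n} (\<lambda>_. borel))" "\<forall>i<m. B i \<in> sets borel"
    then show "measure M {x \<in> space M. (\<lambda>j\<in>{..<n}. S j x) \<in> A \<and>
                                      (\<forall>i<m. conf_pvalue n (\<lambda>j. S j x) i \<in> B i)}
            = (\<integral>x. indicator A (\<lambda>j\<in>{..<n}. S j x) * (\<Prod>i<m. PU n (U x) (B i)) \<partial>M)"
      by (rule main)
  next
    show "indep_vars (\<lambda>_. borel) (\<lambda>j x. U x j) {..<n}" by (rule indU)
  qed (use unif in auto)
qed

end
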